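(* Let $\Gamma$ be a non-elementary hyperbolic group endowed with an admissible metric which is strongly hyperbolic, let $C\ge0$ be a rough geodesic constant for this metric, and let $K>2C$. Set $$\Delta=\{(x,y)\in\Gamma\times\Gamma:\ K-C\le|x,y|\le K+C\},$$ on which $\Gamma$ acts by $g.(x,y)=(gx,gy)$, and for $g\in\Gamma$ define $c_g:\Delta\to\mathbb{R}$ by $c_g(x,y)=\langle g,x\rangle-\langle g,y\rangle$, where $\langle\cdot,\cdot\rangle$ is the Gromov product based at the identity. Then for all sufficiently large $p\in[1,\infty)$, one has $c_g\in\ell^p(\Delta)$ for every $g\in\Gamma$, and the affine isometric action of $\Gamma$ on $\ell^p(\Delta)$ given by $(g,\phi)\mapsto g.\phi+c_g$, where $(g.\phi)(x,y)=\phi(g^{-1}x,g^{-1}y)$, is well-defined and proper.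
   Context: Metric notation: $|x,y|$ is the distance, $|g|=|1,g|$, and the Gromov product with basepoint $o$ is $\langle x,y\rangle_o=\tfrac12(|o,x|+|o,y|-|x,y|)$. A metric space is strongly hyperbolic if $e^{-\langle x,y\rangle_o}\le e^{-\langle x,z\rangle_o}+e^{-\langle z,y\rangle_o}$ for all points $x,y,z,o$. A metric on a hyperbolic group $\Gamma$ is admissible if (i) it is left-invariant: $|gx,gy|=|x,y|$; (ii) it is roughly geodesic with constant $C\ge0$: for all $x,y\in\Gamma$ there is a map $\gamma:[a,b]\to\Gamma$ with $\gamma(a)=x$, $\gamma(b)=y$ and $|s-t|-C\le|\gamma(s),\gamma(t)|\le|s-t|+C$ for all $s,t\in[a,b]$; (iii) it is quasi-isometric to a word metric on $\Gamma$. The map $g\mapsto c_g$ satisfies the cocycle identity $c_{gh}=c_g+g.c_h$. The affine isometric action is proper if $\|c_g\|_p\to\infty$ as $g\to\infty$ in $\Gamma$ (equivalently, for every bounded set $B\subset\ell^p(\Delta)$ only finitely many $g$ satisfy $(g\cdot B)\cap B\neq\emptyset$). *)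

theory Defs
  imports "HOL-Analysis.Analysis" "HOL-Algebra.Coset" "HOL-Algebra.Generated_Groups"
begin

definition gromov :: "('a \<Rightarrow> 'a \<Rightarrow> real) \<Rightarrow> 'a \<Rightarrow> 'a \<Rightarrow> 'a \<Rightarrow> real" where
  "gromov d w x y = (d w x + d w y - d x y) / 2"

definition metric_on :: "'a set \<Rightarrow> ('a \<Rightarrow> 'a \<Rightarrow> real) \<Rightarrow> bool" where
  "metric_on X d \<longleftrightarrow>
     (\<forall>x\<in>X. \<forall>y\<in>X. 0 \<le> d x y \<and> (d x y = 0 \<longleftrightarrow> x = y) \<and> d x y = d y x) \<and>
     (\<forall>x\<in>X. \<forall>y\<in>X. \<forall>z\<in>X. d x z \<le> d x y + d y z)"

definition word_length :: "('a, 'b) monoid_scheme \<Rightarrow> 'a set \<Rightarrow> 'a \<Rightarrow> nat" where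
  "word_length G S g = (LEAST n. \<exists>l. length l = n \<and> set l \<subseteq> S \<union> (\<lambda>s. inv\<^bsub>G\<^esub> s) ` S
                                      \<and> g = foldr (\<lambda>a b. a \<otimes>\<^bsub>G\<^esub> b) l \<one>\<^bsub>G\<^esub>)"

definition word_metric :: "('a, 'b) monoid_scheme \<Rightarrow> 'a set \<Rightarrow> 'a \<Rightarrow> 'a \<Rightarrow> real" where
  "word_metric G S x y = real (word_length G S (inv\<^bsub>G\<^esub> x \<otimes>\<^bsub>G\<^esub> y))"

definition finite_generating_set :: "('a, 'b) monoid_scheme \<Rightarrow> 'a set \<Rightarrow> bool" where
  "finite_generating_set G S \<longleftrightarrow> finite S \<and> S \<subseteq> carrier G \<and> generate G S = carrier G"

definition delta_hyperbolic :: "'a set \<Rightarrow> ('a \<Rightarrow> 'a \<Rightarrow> real) \<Rightarrow> real \<Rightarrow> bool" where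
  "delta_hyperbolic X d \<delta> \<longleftrightarrow>
     (\<forall>w\<in>X. \<forall>x\<in>X. \<forall>y\<in>X. \<forall>z\<in>X.
        gromov d w x y \<ge> min (gromov d w x z) (gromov d w z y) - \<delta>)"

definition hyperbolic_group :: "('a, 'b) monoid_scheme \<Rightarrow> bool" where
  "hyperbolic_group G \<longleftrightarrow> group G \<and>
     (\<exists>S \<delta>. finite_generating_set G S \<and> delta_hyperbolic (carrier G) (word_metric G S) \<delta>)"

definition virtually_cyclic :: "('a, 'b) monoid_scheme \<Rightarrow> bool" where
  "virtually_cyclic G \<longleftrightarrow>
     (\<exists>a\<in>carrier G. finite (rcosets\<^bsub>G\<^esub> (generate G {a})))"

definition non_elementary_hyperbolic :: "('a, 'b) monoid_scheme \<Rightarrow> bool" where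
  "non_elementary_hyperbolic G \<longleftrightarrow> hyperbolic_group G \<and> \<not> virtually_cyclic G"

definition strongly_hyperbolic :: "'a set \<Rightarrow> ('a \<Rightarrow> 'a \<Rightarrow> real) \<Rightarrow> bool" where
  "strongly_hyperbolic X d \<longleftrightarrow>
     (\<forall>x\<in>X. \<forall>y\<in>X. \<forall>z\<in>X. \<forall>w\<in>X.
        exp (- gromov d w x y) \<le> exp (- gromov d w x z) + exp (- gromov d w z y))"

definition left_invariant :: "('a, 'b) monoid_scheme \<Rightarrow> ('a \<Rightarrow> 'a \<Rightarrow> real) \<Rightarrow> bool" where
  "left_invariant G d \<longleftrightarrow>
     (\<forall>g\<in>carrier G. \<forall>x\<in>carrier G. \<forall>y\<in>carrier G. d (g \<otimes>\<^bsub>G\<^esub> x) (g \<otimes>\<^bsub>G\<^esub> y) = d x y)"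

definition roughly_geodesic :: "'a set \<Rightarrow> ('a \<Rightarrow> 'a \<Rightarrow> real) \<Rightarrow> real \<Rightarrow> bool" where
  "roughly_geodesic X d C \<longleftrightarrow>
     (\<forall>x\<in>X. \<forall>y\<in>X. \<exists>(a::real) b (\<gamma>::real \<Rightarrow> 'a). a \<le> b \<and> \<gamma> a = x \<and> \<gamma> b = y \<and>
        \<gamma> ` {a..b} \<subseteq> X \<and>
        (\<forall>s\<in>{a..b}. \<forall>t\<in>{a..b}. \<bar>s - t\<bar> - C \<le> d (\<gamma> s) (\<gamma> t) \<and> d (\<gamma> s) (\<gamma> t) \<le> \<bar>s - t\<bar> + C))"

definition quasi_isometric_metrics :: "'a set \<Rightarrow> ('a \<Rightarrow> 'a \<Rightarrow> real) \<Rightarrow> ('a \<Rightarrow> 'a \<Rightarrow> real) \<Rightarrow> bool" where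
  "quasi_isometric_metrics X d d' \<longleftrightarrow>
     (\<exists>L A. L \<ge> 1 \<and> A \<ge> 0 \<and> (\<forall>x\<in>X. \<forall>y\<in>X.
        d' x y / L - A \<le> d x y \<and> d x y \<le> L * d' x y + A))"

definition admissible_metric :: "('a, 'b) monoid_scheme \<Rightarrow> ('a \<Rightarrow> 'a \<Rightarrow> real) \<Rightarrow> bool" where
  "admissible_metric G d \<longleftrightarrow> metric_on (carrier G) d \<and> left_invariant G d \<and>
     (\<exists>C\<ge>0. roughly_geodesic (carrier G) d C) \<and>
     (\<exists>S. finite_generating_set G S \<and> quasi_isometric_metrics (carrier G) d (word_metric G S))"

text \<open>l^p on a set D of indices, for real valued functions (values outside D ignored).\<close>
definition in_lp :: "real \<Rightarrow> 'c set \<Rightarrow> ('c \<Rightarrow> real) \<Rightarrow> bool" where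
  "in_lp p D \<phi> \<longleftrightarrow> (\<lambda>z. \<bar>\<phi> z\<bar> powr p) summable_on D"

definition lp_norm :: "real \<Rightarrow> 'c set \<Rightarrow> ('c \<Rightarrow> real) \<Rightarrow> real" where
  "lp_norm p D \<phi> = (\<Sum>\<^sub>\<infinity>z\<in>D. \<bar>\<phi> z\<bar> powr p) powr (1 / p)"

definition pair_translate :: "('a, 'b) monoid_scheme \<Rightarrow> 'a \<Rightarrow> ('a \<times> 'a \<Rightarrow> real) \<Rightarrow> 'a \<times> 'a \<Rightarrow> real" where
  "pair_translate G g \<phi> = (\<lambda>(x, y). \<phi> (inv\<^bsub>G\<^esub> g \<otimes>\<^bsub>G\<^esub> x, inv\<^bsub>G\<^esub> g \<otimes>\<^bsub>G\<^esub> y))"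

definition busemann_cocycle :: "('a, 'b) monoid_scheme \<Rightarrow> ('a \<Rightarrow> 'a \<Rightarrow> real) \<Rightarrow> 'a \<Rightarrow> 'a \<times> 'a \<Rightarrow> real" where
  "busemann_cocycle G d g = (\<lambda>(x, y). gromov d \<one>\<^bsub>G\<^esub> g x - gromov d \<one>\<^bsub>G\<^esub> g y)"

definition affine_action :: "('a, 'b) monoid_scheme \<Rightarrow> ('a \<Rightarrow> 'a \<Rightarrow> real) \<Rightarrow> 'a \<Rightarrow> ('a \<times> 'a \<Rightarrow> real) \<Rightarrow> 'a \<times> 'a \<Rightarrow> real" where
  "affine_action G d g \<phi> = (\<lambda>z. pair_translate G g \<phi> z + busemann_cocycle G d g z)"

end

theory Submission
  imports Defs
begin

lemma nonneg_compare_summable: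
  fixes f g :: "'b \<Rightarrow> real"
  assumes "g summable_on A" "\<And>x. x \<in> A \<Longrightarrow> 0 \<le> f x" "\<And>x. x \<in> A \<Longrightarrow> f x \<le> g x"
  shows "f summable_on A"
proof (rule nonneg_bdd_above_summable_on)
  show "0 \<le> f x" if "x \<in> A" for x using assms that by auto
  show "bdd_above (sum f ` {F. F \<subseteq> A \<and> finite F})"
  proof (rule bdd_aboveI2)
    fix F assume F: "F \<in> {F. F \<subseteq> A \<and> finite F}"
    have "sum f F \<le> sum g F" using F assms by (intro sum_mono) auto
    also have "\<dots> \<le> infsum g A"
      using F assms by (intro finite_sum_le_infsum) (auto intro: order.trans)
    finally show "sum f F \<le> infsum g A" .
  qed
qed

lemma count_summable:
  fixes l :: "'b \<Rightarrow> nat" and q :: real and m :: nat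
  assumes fin: "\<And>n. finite {x\<in>X. l x = n}" and cd: "\<And>n. card {x\<in>X. l x = n} \<le> m ^ n"
    and q: "0 \<le> q" "q * m < 1"
  shows "(\<lambda>x. q ^ l x) summable_on X"
proof (rule nonneg_bdd_above_summable_on)
  show "0 \<le> q ^ l x" for x using q by simp
  show "bdd_above ((\<lambda>F. \<Sum>x\<in>F. q ^ l x) ` {F. F \<subseteq> X \<and> finite F})"
  proof (rule bdd_aboveI2)
    fix F assume F: "F \<in> {F. F \<subseteq> X \<and> finite F}"
    define r where "r = q * m"
    have r0: "0 \<le> r" using q by (simp add: r_def)
    have "(\<Sum>x\<in>F. q ^ l x) = (\<Sum>n\<in>l ` F. \<Sum>x\<in>{x\<in>F. l x = n}. q ^ l x)"
      using F by (intro sum.image_gen) auto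
    also have "\<dots> = (\<Sum>n\<in>l ` F. real (card {x\<in>F. l x = n}) * q ^ n)"
    proof (intro sum.cong refl)
      fix n assume "n \<in> l ` F"
      have "(\<Sum>x\<in>{x\<in>F. l x = n}. q ^ l x) = (\<Sum>x\<in>{x\<in>F. l x = n}. q ^ n)"
        by (intro sum.cong refl) simp
      then show "(\<Sum>x\<in>{x\<in>F. l x = n}. q ^ l x) = real (card {x\<in>F. l x = n}) * q ^ n"
        by simp
    qed
    also have "\<dots> \<le> (\<Sum>n\<in>l ` F. r ^ n)"
    proof (intro sum_mono)
      fix n assume "n \<in> l ` F"
      have "card {x\<in>F. l x = n} \<le> card {x\<in>X. l x = n}"
        using F fin by (intro card_mono) auto
      also have "\<dots> \<le> m ^ n" by (rule cd)
      finally have "real (card {x\<in>F. l x = n}) \<le> real m ^ n" by (metis of_nat_le_iff of_nat_power)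
      then have "real (card {x\<in>F. l x = n}) * q ^ n \<le> real m ^ n * q ^ n"
        using q by (intro mult_right_mono) auto
      then show "real (card {x\<in>F. l x = n}) * q ^ n \<le> r ^ n"
        by (simp add: r_def power_mult_distrib mult.commute)
    qed
    also have "\<dots> \<le> suminf (\<lambda>n. r ^ n)"
      using F r0 q by (intro sum_le_suminf summable_geometric) (auto simp: r_def)
    also have "\<dots> = 1 / (1 - r)" using r0 q by (intro suminf_geometric) (auto simp: r_def)
    finally show "(\<Sum>x\<in>F. q ^ l x) \<le> 1 / (1 - r)" .
  qed
qed

context group begin

lemma foldr_mult_carrier:
  "set l \<subseteq> carrier G \<Longrightarrow> foldr (\<lambda>a b. a \<otimes> b) l \<one> \<in> carrier G"
  by (induction l) auto

lemma foldr_mult_append: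
  assumes "set l1 \<subseteq> carrier G" "set l2 \<subseteq> carrier G"
  shows "foldr (\<lambda>a b. a \<otimes> b) (l1 @ l2) \<one> = foldr (\<lambda>a b. a \<otimes> b) l1 \<one> \<otimes> foldr (\<lambda>a b. a \<otimes> b) l2 \<one>"
  using assms
proof (induction l1)
  case Nil then show ?case using foldr_mult_carrier by simp
next
  case (Cons a l1)
  then show ?case using foldr_mult_carrier by (simp add: m_assoc)
qed

lemma generate_word:
  assumes "S \<subseteq> carrier G" "x \<in> generate G S"
  shows "\<exists>l. set l \<subseteq> S \<union> (\<lambda>s. inv s) ` S \<and> x = foldr (\<lambda>a b. a \<otimes> b) l \<one>"
  using assms(2)
proof (induction rule: generate.induct)
  case one
  then show ?case by (intro exI[of _ "[]"]) auto
next
  case (incl h)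
  then show ?case using assms(1) by (intro exI[of _ "[h]"]) auto
next
  case (inv h)
  then show ?case using assms(1) by (intro exI[of _ "[inv h]"]) auto
next
  case (eng h1 h2)
  then obtain l1 l2 where l: "set l1 \<subseteq> S \<union> (\<lambda>s. inv s) ` S" "h1 = foldr (\<lambda>a b. a \<otimes> b) l1 \<one>"
     "set l2 \<subseteq> S \<union> (\<lambda>s. inv s) ` S" "h2 = foldr (\<lambda>a b. a \<otimes> b) l2 \<one>" by blast
  have "S \<union> (\<lambda>s. inv s) ` S \<subseteq> carrier G" using assms(1) by auto
  then have "set l1 \<subseteq> carrier G" "set l2 \<subseteq> carrier G" using l by auto
  then have "h1 \<otimes> h2 = foldr (\<lambda>a b. a \<otimes> b) (l1 @ l2) \<one>"
    using l foldr_mult_append[of l1 l2] by simp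
  then show ?case using l by (intro exI[of _ "l1 @ l2"]) auto
qed

end


lemma exp_diff_bound:
  fixes a b c B :: real
  assumes "exp (-a) \<le> exp (-c) + exp (-b)" "exp (-b) \<le> exp (-c) + exp (-a)"
    "a \<le> B" "b \<le> B"
  shows "\<bar>a - b\<bar> \<le> exp B * exp (-c)"
proof -
  have key: "v - u \<le> exp B * exp (-c)" if "u \<le> v" "exp (-u) \<le> exp (-c) + exp (-v)" "v \<le> B" for u v
  proof -
    have "v - u \<le> exp (v - u) - 1" using exp_ge_add_one_self[of "v - u"] by linarith
    also have "exp (v - u) - 1 = exp v * (exp (-u) - exp (-v))"
      by (simp add: algebra_simps exp_diff exp_minus field_simps)
    also have "\<dots> \<le> exp v * exp (-c)" using that by (intro mult_left_mono) auto
    also have "\<dots> \<le> exp B * exp (-c)" using that by (intro mult_right_mono) auto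
    finally show ?thesis .
  qed
  show ?thesis
  proof (cases "a \<le> b")
    case True
    then show ?thesis using key[of a b] assms by auto
  next
    case False
    then show ?thesis using key[of b a] assms by auto
  qed
qed

lemma gromov_sym:
  assumes "metric_on X d" "w \<in> X" "x \<in> X" "y \<in> X"
  shows "gromov d w x y = gromov d w y x"
  using assms unfolding metric_on_def gromov_def by auto

lemma gromov_le:
  assumes "metric_on X d" "w \<in> X" "x \<in> X" "y \<in> X"
  shows "gromov d w x y \<le> d w x"
proof -
  have "d w y \<le> d w x + d x y" using assms unfolding metric_on_def by blast
  then show ?thesis unfolding gromov_def by simp
qed

lemma gromov_ge:
  assumes "metric_on X d" "w \<in> X" "x \<in> X" "y \<in> X"
  shows "gromov d w x y \<ge> d w x - d x y"
proof -
  have "d w x \<le> d w y + d y x" "d y x = d x y" using assms unfolding metric_on_def by auto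
  then show ?thesis unfolding gromov_def by simp
qed

lemma decay:
  assumes M: "metric_on X d" and SH: "strongly_hyperbolic X d"
    and X: "w \<in> X" "g \<in> X" "x \<in> X" "y \<in> X"
  shows "\<bar>gromov d w g x - gromov d w g y\<bar> \<le> exp (d w g) * exp (- gromov d w x y)"
proof (rule exp_diff_bound)
  have "exp (- gromov d w x g) \<le> exp (- gromov d w x y) + exp (- gromov d w y g)"
    using SH X unfolding strongly_hyperbolic_def by blast
  moreover have "gromov d w x g = gromov d w g x" "gromov d w y g = gromov d w g y"
    using gromov_sym[OF M] X by auto
  ultimately show "exp (- gromov d w g x) \<le> exp (- gromov d w x y) + exp (- gromov d w g y)"
    by simp
  have "exp (- gromov d w y g) \<le> exp (- gromov d w y x) + exp (- gromov d w x g)"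
    using SH X unfolding strongly_hyperbolic_def by blast
  moreover have "gromov d w x g = gromov d w g x" "gromov d w y g = gromov d w g y"
     "gromov d w y x = gromov d w x y"
    using gromov_sym[OF M] X by auto
  ultimately show "exp (- gromov d w g y) \<le> exp (- gromov d w x y) + exp (- gromov d w g x)"
    by simp
  show "gromov d w g x \<le> d w g" "gromov d w g y \<le> d w g" using gromov_le[OF M] X by auto
qed

lemma summable_on_finite_UN:
  fixes f :: "'b \<Rightarrow> real"
  assumes "finite I" "\<And>i. i \<in> I \<Longrightarrow> f summable_on (A i)"
  shows "f summable_on (\<Union>i\<in>I. A i)"
  using assms
proof (induction I rule: finite_induct)
  case empty then show ?case by simp
next
  case (insert i I)
  then show ?case using summable_on_union[of f "A i" "\<Union>i\<in>I. A i"] by simp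
qed

lemma powr_sum_bound:
  fixes a b p :: real
  assumes "0 \<le> p"
  shows "\<bar>a + b\<bar> powr p \<le> 2 powr p * (\<bar>a\<bar> powr p + \<bar>b\<bar> powr p)"
proof -
  have "\<bar>a + b\<bar> \<le> 2 * max \<bar>a\<bar> \<bar>b\<bar>" by linarith
  then have "\<bar>a + b\<bar> powr p \<le> (2 * max \<bar>a\<bar> \<bar>b\<bar>) powr p"
    using assms by (intro powr_mono2) auto
  also have "\<dots> = 2 powr p * max \<bar>a\<bar> \<bar>b\<bar> powr p" by (simp add: powr_mult)
  also have "max \<bar>a\<bar> \<bar>b\<bar> powr p \<le> \<bar>a\<bar> powr p + \<bar>b\<bar> powr p"
    by (cases "\<bar>a\<bar> \<le> \<bar>b\<bar>") (auto simp: max_def)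
  then have "2 powr p * max \<bar>a\<bar> \<bar>b\<bar> powr p \<le> 2 powr p * (\<bar>a\<bar> powr p + \<bar>b\<bar> powr p)"
    by (intro mult_left_mono) auto
  finally show ?thesis .
qed

context group begin

lemma wl_word:
  assumes S: "finite_generating_set G S" and x: "x \<in> carrier G"
  shows "\<exists>l. length l = word_length G S x \<and> set l \<subseteq> S \<union> (\<lambda>s. inv s) ` S
              \<and> x = foldr (\<lambda>a b. a \<otimes> b) l \<one>"
proof -
  have "x \<in> generate G S" using S x unfolding finite_generating_set_def by auto
  then obtain l where l: "set l \<subseteq> S \<union> (\<lambda>s. inv s) ` S" "x = foldr (\<lambda>a b. a \<otimes> b) l \<one>"
    using generate_word S unfolding finite_generating_set_def by blast
  then have ex: "\<exists>n l. length l = n \<and> set l \<subseteq> S \<union> (\<lambda>s. inv s) ` S \<and> x = foldr (\<lambda>a b. a \<otimes> b) l \<one>"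
    by blast
  show ?thesis unfolding word_length_def by (rule LeastI_ex[OF ex])
qed

lemma wl_level_finite:
  assumes S: "finite_generating_set G S"
  shows "finite {x\<in>carrier G. word_length G S x = n}
    \<and> card {x\<in>carrier G. word_length G S x = n} \<le> card (S \<union> (\<lambda>s. inv s) ` S) ^ n"
proof -
  let ?T = "S \<union> (\<lambda>s. inv s) ` S"
  have fT: "finite ?T" using S unfolding finite_generating_set_def by auto
  have sub: "{x\<in>carrier G. word_length G S x = n} \<subseteq> (\<lambda>l. foldr (\<lambda>a b. a \<otimes> b) l \<one>) ` {l. set l \<subseteq> ?T \<and> length l = n}"
  proof
    fix x assume "x \<in> {x\<in>carrier G. word_length G S x = n}"
    then obtain l where "length l = n" "set l \<subseteq> ?T" "x = foldr (\<lambda>a b. a \<otimes> b) l \<one>"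
      using wl_word[OF S, of x] by auto
    then show "x \<in> (\<lambda>l. foldr (\<lambda>a b. a \<otimes> b) l \<one>) ` {l. set l \<subseteq> ?T \<and> length l = n}"
      by auto
  qed
  have fL: "finite {l. set l \<subseteq> ?T \<and> length l = n}" using fT by (simp add: finite_lists_length_eq)
  have "card {x\<in>carrier G. word_length G S x = n} \<le> card ((\<lambda>l. foldr (\<lambda>a b. a \<otimes> b) l \<one>) ` {l. set l \<subseteq> ?T \<and> length l = n})"
    using sub fL by (intro card_mono) auto
  also have "\<dots> \<le> card {l. set l \<subseteq> ?T \<and> length l = n}" by (rule card_image_le[OF fL])
  also have "\<dots> = card ?T ^ n" using fT by (simp add: card_lists_length_eq)
  finally have "card {x\<in>carrier G. word_length G S x = n} \<le> card ?T ^ n" .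
  moreover have "finite {x\<in>carrier G. word_length G S x = n}"
    by (rule finite_subset[OF sub]) (use fL in simp)
  ultimately show ?thesis by simp
qed

lemma wl_ball_finite:
  assumes S: "finite_generating_set G S"
  shows "finite {x\<in>carrier G. word_length G S x \<le> N}"
proof -
  have "{x\<in>carrier G. word_length G S x \<le> N} = (\<Union>n\<in>{..N}. {x\<in>carrier G. word_length G S x = n})"
    by auto
  then show ?thesis using wl_level_finite[OF S] by auto
qed

lemma word_metric_one:
  "x \<in> carrier G \<Longrightarrow> word_metric G S \<one> x = real (word_length G S x)"
  unfolding word_metric_def by simp

end


lemma (in group) main_aux:
  fixes d :: "'a \<Rightarrow> 'a \<Rightarrow> real" and C K :: real
  assumes "admissible_metric G d"
    and "strongly_hyperbolic (carrier G) d"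
    and "C \<ge> 0" and "roughly_geodesic (carrier G) d C"
    and "K > 2 * C"
    and Ddef: "\<Delta> = {(x, y). x \<in> carrier G \<and> y \<in> carrier G \<and> K - C \<le> d x y \<and> d x y \<le> K + C}"
  shows "\<exists>p0\<ge>1. \<forall>p\<ge>p0.
           (\<forall>g\<in>carrier G. in_lp p \<Delta> (busemann_cocycle G d g))
         \<and> (\<forall>g\<in>carrier G. \<forall>\<phi>. in_lp p \<Delta> \<phi> \<longrightarrow> in_lp p \<Delta> (affine_action G d g \<phi>))
         \<and> (\<forall>\<phi>. \<forall>z\<in>\<Delta>. affine_action G d \<one>\<^bsub>G\<^esub> \<phi> z = \<phi> z)
         \<and> (\<forall>g\<in>carrier G. \<forall>h\<in>carrier G. \<forall>\<phi>. \<forall>z\<in>\<Delta>.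
               affine_action G d (g \<otimes>\<^bsub>G\<^esub> h) \<phi> z = affine_action G d g (affine_action G d h \<phi>) z)
         \<and> (\<forall>g\<in>carrier G. \<forall>\<phi> \<psi>. in_lp p \<Delta> \<phi> \<longrightarrow> in_lp p \<Delta> \<psi> \<longrightarrow>
               lp_norm p \<Delta> (\<lambda>z. affine_action G d g \<phi> z - affine_action G d g \<psi> z) = lp_norm p \<Delta> (\<lambda>z. \<phi> z - \<psi> z))
         \<and> (\<forall>R. finite {g \<in> carrier G. lp_norm p \<Delta> (busemann_cocycle G d g) \<le> R})"
proof -
  obtain S L A where M: "metric_on (carrier G) d" and LI: "left_invariant G d"
    and S: "finite_generating_set G S" and L: "L \<ge> 1" "A \<ge> 0"
    and QI: "\<forall>x\<in>carrier G. \<forall>y\<in>carrier G. word_metric G S x y / L - A \<le> d x y \<and> d x y \<le> L * word_metric G S x y + A"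
    using assms(1) unfolding admissible_metric_def quasi_isometric_metrics_def by blast
  have SH: "strongly_hyperbolic (carrier G) d" by fact
  have C0: "C \<ge> 0" and KC: "K > 2 * C" by fact+
  have RG: "roughly_geodesic (carrier G) d C" by fact
  define wl where "wl = word_length G S"
  have li: "d (g \<otimes> x) (g \<otimes> y) = d x y" if "g \<in> carrier G" "x \<in> carrier G" "y \<in> carrier G" for g x y
    using LI that unfolding left_invariant_def by blast
  have d0: "d x x = 0" if "x \<in> carrier G" for x using M that unfolding metric_on_def by blast
  have dpos: "0 \<le> d x y" if "x \<in> carrier G" "y \<in> carrier G" for x y using M that unfolding metric_on_def by blast
  have deq0: "d x y = 0 \<Longrightarrow> x = y" if "x \<in> carrier G" "y \<in> carrier G" for x y using M that unfolding metric_on_def by blast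
  have dsym: "d x y = d y x" if "x \<in> carrier G" "y \<in> carrier G" for x y using M that unfolding metric_on_def by blast
  have tri: "d x z \<le> d x y + d y z" if "x \<in> carrier G" "y \<in> carrier G" "z \<in> carrier G" for x y z
    using M that unfolding metric_on_def by blast
  have wl_lower: "real (wl x) / L - A \<le> d \<one> x" if "x \<in> carrier G" for x
  proof -
    have "word_metric G S \<one> x / L - A \<le> d \<one> x" using QI that by auto
    then show ?thesis using word_metric_one[OF that, of S] by (simp add: wl_def)
  qed
  have wl_upper: "real (wl x) \<le> L * (d \<one> x + A)" if "x \<in> carrier G" for x
  proof -
    have "real (wl x) / L \<le> d \<one> x + A" using wl_lower[OF that] by simp
    then show ?thesis using L by (simp add: field_simps)
  qed
  have Dmem: "z \<in> \<Delta> \<longleftrightarrow> fst z \<in> carrier G \<and> snd z \<in> carrier G \<and> K - C \<le> d (fst z) (snd z) \<and> d (fst z) (snd z) \<le> K + C" for z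
    by (cases z) (simp add: Ddef)
  define T where "T = S \<union> (\<lambda>s. inv s) ` S"
  define m where "m = card T"
  define p0 where "p0 = max 1 (L * (ln (real m + 1) + 1))"

  define \<sigma> where "\<sigma> g z = (inv g \<otimes> fst z, inv g \<otimes> snd z)" for g z
  have bij: "bij_betw (\<sigma> g) \<Delta> \<Delta>" if g: "g \<in> carrier G" for g
  proof (rule bij_betwI[where g = "\<sigma> (inv g)"])
    show "\<sigma> g \<in> \<Delta> \<rightarrow> \<Delta>"
    proof
      fix z assume "z \<in> \<Delta>"
      then show "\<sigma> g z \<in> \<Delta>" using g li[of "inv g" "fst z" "snd z"] by (simp add: Dmem \<sigma>_def)
    qed
    show "\<sigma> (inv g) \<in> \<Delta> \<rightarrow> \<Delta>"
    proof
      fix z assume "z \<in> \<Delta>"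
      then show "\<sigma> (inv g) z \<in> \<Delta>" using g li[of "g" "fst z" "snd z"] by (simp add: Dmem \<sigma>_def)
    qed
    show "\<sigma> (inv g) (\<sigma> g z) = z" if "z \<in> \<Delta>" for z
      using that g by (cases z) (simp add: Dmem \<sigma>_def m_assoc[symmetric])
    show "\<sigma> g (\<sigma> (inv g) z) = z" if "z \<in> \<Delta>" for z
      using that g by (cases z) (simp add: Dmem \<sigma>_def m_assoc[symmetric])
  qed
  have pt: "pair_translate G g \<phi> z = \<phi> (\<sigma> g z)" for g \<phi> z
    by (cases z) (simp add: pair_translate_def \<sigma>_def)
  have cdef: "busemann_cocycle G d g z = gromov d \<one> g (fst z) - gromov d \<one> g (snd z)" for g z
    by (cases z) (simp add: busemann_cocycle_def)
  have id_ok: "affine_action G d \<one> \<phi> z = \<phi> z" if "z \<in> \<Delta>" for \<phi> z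
  proof -
    have z: "fst z \<in> carrier G" "snd z \<in> carrier G" using that by (auto simp: Dmem)
    have "pair_translate G \<one> \<phi> z = \<phi> z" using z by (simp add: pt \<sigma>_def)
    moreover have "busemann_cocycle G d \<one> z = 0" using z d0 by (simp add: cdef gromov_def)
    ultimately show ?thesis by (simp add: affine_action_def)
  qed
  have comp_ok: "affine_action G d (g \<otimes> h) \<phi> z = affine_action G d g (affine_action G d h \<phi>) z"
    if g: "g \<in> carrier G" and h: "h \<in> carrier G" and "z \<in> \<Delta>" for g h \<phi> z
  proof -
    obtain x y where zxy: "z = (x, y)" by (cases z)
    have x: "x \<in> carrier G" and y: "y \<in> carrier G" using that zxy by (auto simp: Dmem)
    have e1: "d \<one> (inv g \<otimes> x) = d g x" using li[of g \<one> "inv g \<otimes> x"] g x by (simp add: m_assoc[symmetric])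
    have e2: "d \<one> (inv g \<otimes> y) = d g y" using li[of g \<one> "inv g \<otimes> y"] g y by (simp add: m_assoc[symmetric])
    have e3: "d h (inv g \<otimes> x) = d (g \<otimes> h) x" using li[of g h "inv g \<otimes> x"] g h x by (simp add: m_assoc[symmetric])
    have e4: "d h (inv g \<otimes> y) = d (g \<otimes> h) y" using li[of g h "inv g \<otimes> y"] g h y by (simp add: m_assoc[symmetric])
    have e5: "d \<one> h = d g (g \<otimes> h)" using li[of g \<one> h] g h by simp
    have sig: "\<sigma> (g \<otimes> h) z = \<sigma> h (\<sigma> g z)"
      using g h x y by (simp add: \<sigma>_def zxy inv_mult_group m_assoc)
    have c1: "busemann_cocycle G d (g \<otimes> h) z = busemann_cocycle G d h (\<sigma> g z) + busemann_cocycle G d g z"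
      using e1 e2 e3 e4 e5 by (simp add: cdef \<sigma>_def zxy gromov_def field_simps)
    show ?thesis
      by (simp add: affine_action_def sig c1 pt)
  qed
  have iso: "lp_norm p \<Delta> (\<lambda>z. affine_action G d g \<phi> z - affine_action G d g \<psi> z) = lp_norm p \<Delta> (\<lambda>z. \<phi> z - \<psi> z)"
    if g: "g \<in> carrier G" for p g \<phi> \<psi>
  proof -
    have "(\<Sum>\<^sub>\<infinity>z\<in>\<Delta>. \<bar>affine_action G d g \<phi> z - affine_action G d g \<psi> z\<bar> powr p)
        = (\<Sum>\<^sub>\<infinity>z\<in>\<Delta>. (\<lambda>w. \<bar>\<phi> w - \<psi> w\<bar> powr p) (\<sigma> g z))"
      by (simp add: affine_action_def pt)
    also have "\<dots> = (\<Sum>\<^sub>\<infinity>z\<in>\<Delta>. \<bar>\<phi> z - \<psi> z\<bar> powr p)"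
      by (rule infsum_reindex_bij_betw[OF bij[OF g]])
    finally show ?thesis by (simp add: lp_norm_def)
  qed
  have trans_lp: "in_lp p \<Delta> (pair_translate G g \<phi>)" if g: "g \<in> carrier G" and "in_lp p \<Delta> \<phi>" for p g \<phi>
  proof -
    have "(\<lambda>z. (\<lambda>w. \<bar>\<phi> w\<bar> powr p) (\<sigma> g z)) summable_on \<Delta> \<longleftrightarrow> (\<lambda>w. \<bar>\<phi> w\<bar> powr p) summable_on \<Delta>"
      by (rule summable_on_reindex_bij_betw[OF bij[OF g]])
    then have "(\<lambda>z. (\<lambda>w. \<bar>\<phi> w\<bar> powr p) (\<sigma> g z)) summable_on \<Delta>"
      using that(2) unfolding in_lp_def by blast
    then show ?thesis by (simp add: in_lp_def pt)
  qed
  have add_lp: "in_lp p \<Delta> (\<lambda>z. \<phi> z + \<psi> z)" if p: "0 \<le> p" and "in_lp p \<Delta> \<phi>" "in_lp p \<Delta> \<psi>" for p \<phi> \<psi>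
  proof -
    have "(\<lambda>z. 2 powr p * (\<bar>\<phi> z\<bar> powr p + \<bar>\<psi> z\<bar> powr p)) summable_on \<Delta>"
      using that by (intro summable_on_cmult_right summable_on_add) (auto simp: in_lp_def)
    then show ?thesis unfolding in_lp_def
      by (rule nonneg_compare_summable) (use powr_sum_bound[OF p] in auto)
  qed
  have L0: "L > 0" using L by simp
  have K0: "K > 0" and KC2: "K - 2 * C > 0" using C0 KC by auto
  have p0ge1: "p0 \<ge> 1" by (simp add: p0_def)
  have lev: "finite {x\<in>carrier G. wl x = n} \<and> card {x\<in>carrier G. wl x = n} \<le> m ^ n" for n
    using wl_level_finite[OF S, of n] by (simp add: wl_def m_def T_def)
  define N where "N = nat \<lceil>L * (K + C + A)\<rceil>"
  define B where "B = {u\<in>carrier G. wl u \<le> N}"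
  have Bfin: "finite B" unfolding B_def wl_def by (rule wl_ball_finite[OF S])
  have Dsub: "\<Delta> \<subseteq> (\<Union>u\<in>B. (\<lambda>x. (x, x \<otimes> u)) ` carrier G)"
  proof
    fix z assume z: "z \<in> \<Delta>"
    obtain x y where zxy: "z = (x, y)" by (cases z)
    have x: "x \<in> carrier G" and y: "y \<in> carrier G" and dxy: "d x y \<le> K + C" using z zxy by (auto simp: Dmem)
    define u where "u = inv x \<otimes> y"
    have u: "u \<in> carrier G" using x y by (simp add: u_def)
    have yu: "y = x \<otimes> u" using x y by (simp add: u_def m_assoc[symmetric])
    have "d \<one> u = d x y" using li[of x \<one> u] x u yu by simp
    then have "real (wl u) \<le> L * (K + C + A)" using wl_upper[OF u] dxy L0
      by (smt (verit, best) mult_left_mono)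
    then have "wl u \<le> N" unfolding N_def by linarith
    then have "u \<in> B" using u by (simp add: B_def)
    then show "z \<in> (\<Union>u\<in>B. (\<lambda>x. (x, x \<otimes> u)) ` carrier G)" using zxy yu x by blast
  qed
  have cg_lp: "in_lp p \<Delta> (busemann_cocycle G d g)" if pp: "p \<ge> p0" and g: "g \<in> carrier G" for p g
  proof -
    have p1: "p \<ge> 1" using pp by (simp add: p0_def)
    have "L * (ln (real m + 1) + 1) \<le> p" using pp by (simp add: p0_def)
    then have pL: "ln (real m + 1) + 1 \<le> p / L" using L0 by (simp add: field_simps)
    define q where "q = exp (- p / L)"
    have q0: "0 \<le> q" by (simp add: q_def)
    have "q \<le> exp (- ln (real m + 1))" unfolding q_def using pL by simp
    also have "\<dots> = 1 / (real m + 1)" by (simp add: exp_minus inverse_eq_divide)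
    finally have "q \<le> 1 / (real m + 1)" .
    then have "q * real m \<le> real m / (real m + 1)"
      by (metis divide_inverse mult.commute mult_left_mono mult_1 of_nat_0_le_iff)
    also have "\<dots> < 1" by simp
    finally have qm: "q * real m < 1" .
    have qs: "(\<lambda>x. q ^ wl x) summable_on carrier G"
      using lev q0 qm by (intro count_summable) auto
    have hs: "(\<lambda>x. exp (- d \<one> x * p)) summable_on carrier G"
    proof (rule nonneg_compare_summable)
      show "(\<lambda>x. exp (p * A) * q ^ wl x) summable_on carrier G" by (rule summable_on_cmult_right[OF qs])
      show "0 \<le> exp (- d \<one> x * p)" for x by simp
      fix x assume x: "x \<in> carrier G"
      have "p * (real (wl x) / L - A) \<le> p * d \<one> x" using wl_lower[OF x] p1 by (intro mult_left_mono) auto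
      then have "- d \<one> x * p \<le> p * A + real (wl x) * (- p / L)" by (simp add: algebra_simps)
      then have ee: "exp (- d \<one> x * p) \<le> exp (p * A + real (wl x) * (- p / L))" by simp
      have "exp (p * A + real (wl x) * (- p / L)) = exp (p * A) * exp (real (wl x) * (- p / L))" by (rule exp_add)
      also have "\<dots> = exp (p * A) * q ^ wl x" unfolding q_def by (simp only: exp_of_nat_mult)
      finally have "exp (p * A + real (wl x) * (- p / L)) = exp (p * A) * q ^ wl x" .
      with ee show "exp (- d \<one> x * p) \<le> exp (p * A) * q ^ wl x" by (rule ord_le_eq_trans)
    qed
    have Fs: "(\<lambda>z. exp (- d \<one> (fst z) * p)) summable_on \<Delta>"
    proof (rule summable_on_subset_banach[OF _ Dsub])
      show "(\<lambda>z. exp (- d \<one> (fst z) * p)) summable_on (\<Union>u\<in>B. (\<lambda>x. (x, x \<otimes> u)) ` carrier G)"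
      proof (rule summable_on_finite_UN[OF Bfin])
        fix u assume "u \<in> B"
        have inj: "inj_on (\<lambda>x. (x, x \<otimes> u)) (carrier G)" by (rule inj_onI) simp
        show "(\<lambda>z. exp (- d \<one> (fst z) * p)) summable_on (\<lambda>x. (x, x \<otimes> u)) ` carrier G"
          using summable_on_reindex[OF inj, of "\<lambda>z. exp (- d \<one> (fst z) * p)"] hs by (simp add: o_def)
      qed
    qed
    define Mg where "Mg = exp (d \<one> g + K + C)"
    have bound: "\<bar>busemann_cocycle G d g z\<bar> powr p \<le> Mg powr p * exp (- d \<one> (fst z) * p)" if z: "z \<in> \<Delta>" for z
    proof -
      obtain x y where zxy: "z = (x, y)" by (cases z)
      have x: "x \<in> carrier G" and y: "y \<in> carrier G" and dxy: "d x y \<le> K + C" using z zxy by (auto simp: Dmem)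
      have "\<bar>busemann_cocycle G d g z\<bar> \<le> exp (d \<one> g) * exp (- gromov d \<one> x y)"
        using decay[OF M SH, of \<one> g x y] x y g by (simp add: cdef zxy)
      also have "exp (- gromov d \<one> x y) \<le> exp (K + C - d \<one> x)"
        using gromov_ge[OF M, of \<one> x y] x y dxy by simp
      then have "exp (d \<one> g) * exp (- gromov d \<one> x y) \<le> exp (d \<one> g) * exp (K + C - d \<one> x)" by simp
      also have "\<dots> = Mg * exp (- d \<one> x)" by (simp add: Mg_def exp_add[symmetric])
      finally have "\<bar>busemann_cocycle G d g z\<bar> \<le> Mg * exp (- d \<one> x)" .
      then have "\<bar>busemann_cocycle G d g z\<bar> powr p \<le> (Mg * exp (- d \<one> x)) powr p"
        using p1 by (intro powr_mono2) auto
      also have "\<dots> = Mg powr p * exp (- d \<one> x * p)" by (simp add: powr_mult exp_powr_real Mg_def)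
      finally show ?thesis by (simp add: zxy)
    qed
    show ?thesis unfolding in_lp_def
      by (rule nonneg_compare_summable[OF summable_on_cmult_right[OF Fs, of "Mg powr p"]])
         (use bound in auto)
  qed
  have aff_lp: "in_lp p \<Delta> (affine_action G d g \<phi>)" if "p \<ge> p0" "g \<in> carrier G" "in_lp p \<Delta> \<phi>" for p g \<phi>
    unfolding affine_action_def using that p0ge1
    by (intro add_lp trans_lp cg_lp) auto
  have RG': "\<forall>x\<in>carrier G. \<forall>y\<in>carrier G. \<exists>(a::real) b (\<gamma>::real \<Rightarrow> 'a). a \<le> b \<and> \<gamma> a = x \<and> \<gamma> b = y \<and>
        \<gamma> ` {a..b} \<subseteq> carrier G \<and>
        (\<forall>s\<in>{a..b}. \<forall>t\<in>{a..b}. \<bar>s - t\<bar> - C \<le> d (\<gamma> s) (\<gamma> t) \<and> d (\<gamma> s) (\<gamma> t) \<le> \<bar>s - t\<bar> + C)"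
    using RG unfolding roughly_geodesic_def .
  have proper: "finite {g \<in> carrier G. lp_norm p \<Delta> (busemann_cocycle G d g) \<le> R}" if pp: "p \<ge> p0" for p R
  proof -
    have p1: "p \<ge> 1" using pp by (simp add: p0_def)
    define Q where "Q = max R 0 powr p / (K - 2 * C) powr p"
    define Nb where "Nb = nat \<lceil>L * (K * (Q + 1) + C + A)\<rceil>"
    have "{g \<in> carrier G. lp_norm p \<Delta> (busemann_cocycle G d g) \<le> R} \<subseteq> {g\<in>carrier G. wl g \<le> Nb}"
    proof safe
      fix g assume g: "g \<in> carrier G" and le: "lp_norm p \<Delta> (busemann_cocycle G d g) \<le> R"
      obtain a b \<gamma> where ab: "a \<le> b" and ga: "\<gamma> a = \<one>" and gb: "\<gamma> b = g"
        and gim: "\<gamma> ` {a..b} \<subseteq> carrier G"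
        and rg0: "\<forall>s\<in>{a..b}. \<forall>t\<in>{a..b}. \<bar>s - t\<bar> - C \<le> d (\<gamma> s) (\<gamma> t) \<and> d (\<gamma> s) (\<gamma> t) \<le> \<bar>s - t\<bar> + C"
        using RG'[rule_format, OF one_closed g] by auto
      have rg: "\<bar>s - t\<bar> - C \<le> d (\<gamma> s) (\<gamma> t) \<and> d (\<gamma> s) (\<gamma> t) \<le> \<bar>s - t\<bar> + C"
        if "s \<in> {a..b}" "t \<in> {a..b}" for s t using rg0 that by blast
      define D where "D = b - a"
      have D0: "D \<ge> 0" using ab by (simp add: D_def)
      define mm where "mm = nat \<lfloor>D / K\<rfloor>"
      have mmK: "real mm * K \<le> D"
      proof -
        have "real mm \<le> D / K" using D0 K0 by (simp add: mm_def)
        then show ?thesis using K0 by (simp add: field_simps)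
      qed
      have mmgt: "D / K < real mm + 1" using D0 K0 by (simp add: mm_def)
      define xs where "xs i = \<gamma> (a + real i * K)" for i
      have inab: "a + real i * K \<in> {a..b}" if "i \<le> mm" for i
      proof -
        have h: "real i * K \<le> real mm * K" using that K0 by (intro mult_right_mono) auto
        have "a + real i * K \<le> b" using h mmK unfolding D_def by linarith
        moreover have "a \<le> a + real i * K" using K0 by simp
        ultimately show ?thesis by simp
      qed
      have xsC: "xs i \<in> carrier G" if "i \<le> mm" for i using gim inab[OF that] by (auto simp: xs_def)
      have d1: "d \<one> (xs i) \<le> real i * K + C" "d \<one> (xs i) \<ge> real i * K - C" if "i \<le> mm" for i
        using rg[OF _ inab[OF that], of a] ab K0 by (auto simp: xs_def ga)
      have dg: "d g (xs i) \<le> D - real i * K + C" "d g (xs i) \<ge> D - real i * K - C" if "i \<le> mm" for i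
      proof -
        have "real i * K \<le> D" using inab[OF that] by (simp add: D_def)
        then have "\<bar>b - (a + real i * K)\<bar> = D - real i * K" by (simp add: D_def)
        then show "d g (xs i) \<le> D - real i * K + C" "d g (xs i) \<ge> D - real i * K - C"
          using rg[OF _ inab[OF that], of b] ab by (auto simp: xs_def gb)
      qed
      have dxx: "d (xs i) (xs j) \<ge> (real j - real i) * K - C" if "i \<le> j" "j \<le> mm" for i j
      proof -
        have "\<bar>(a + real i * K) - (a + real j * K)\<bar> = (real j - real i) * K"
          using that K0 by (simp add: abs_if algebra_simps mult_right_mono)
        then show ?thesis using rg[OF inab inab, of i j] that by (simp add: xs_def)
      qed
      have dxx2: "d (xs i) (xs (Suc i)) \<le> K + C" if "Suc i \<le> mm" for i
      proof -
        have "\<bar>(a + real i * K) - (a + real (Suc i) * K)\<bar> = K"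
          using K0 by (simp add: algebra_simps)
        then show ?thesis using rg[OF inab inab, of i "Suc i"] that by (simp add: xs_def)
      qed
      define P where "P = (\<lambda>i. (xs i, xs (Suc i))) ` {..<mm}"
      have PD: "P \<subseteq> \<Delta>"
      proof
        fix z assume "z \<in> P"
        then obtain i where i: "i < mm" "z = (xs i, xs (Suc i))" by (auto simp: P_def)
        then show "z \<in> \<Delta>" using dxx[of i "Suc i"] dxx2[of i] xsC[of i] xsC[of "Suc i"]
          by (simp add: Dmem)
      qed
      have inj: "inj_on (\<lambda>i. (xs i, xs (Suc i))) {..<mm}"
      proof (rule inj_onI)
        fix i j assume i: "i \<in> {..<mm}" and j: "j \<in> {..<mm}" and eq: "(xs i, xs (Suc i)) = (xs j, xs (Suc j))"
        show "i = j"
        proof (rule ccontr)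
          assume ne: "i \<noteq> j"
          have h1: "d (xs (min i j)) (xs (max i j)) \<ge> (real (max i j) - real (min i j)) * K - C"
            using i j by (intro dxx) auto
          have h2: "(real (max i j) - real (min i j)) * K \<ge> K"
            using ne K0 by (cases "i < j") (auto simp: max_def min_def)
          have h3: "xs (min i j) = xs (max i j)" using eq by (auto simp: min_def max_def)
          have "d (xs (min i j)) (xs (max i j)) = 0" using d0[OF xsC[of "min i j"]] h3 i by simp
          then show False using h1 h2 KC C0 by linarith
        qed
      qed
      have cbig: "\<bar>busemann_cocycle G d g (xs i, xs (Suc i))\<bar> \<ge> K - 2 * C" if "i < mm" for i
      proof -
        have "busemann_cocycle G d g (xs i, xs (Suc i))
           = (d \<one> (xs i) - d g (xs i) - d \<one> (xs (Suc i)) + d g (xs (Suc i))) / 2"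
          by (simp add: busemann_cocycle_def gromov_def field_simps)
        moreover have "d \<one> (xs i) \<le> real i * K + C" "d g (xs i) \<ge> D - real i * K - C"
          "d \<one> (xs (Suc i)) \<ge> real (Suc i) * K - C" "d g (xs (Suc i)) \<le> D - real (Suc i) * K + C"
          using d1[of i] d1[of "Suc i"] dg[of i] dg[of "Suc i"] that by auto
        ultimately have "busemann_cocycle G d g (xs i, xs (Suc i)) \<le> - K + 2 * C"
          by (simp add: algebra_simps)
        then show ?thesis using KC by linarith
      qed
      have summ: "(\<lambda>z. \<bar>busemann_cocycle G d g z\<bar> powr p) summable_on \<Delta>"
        using cg_lp[OF pp g] by (simp add: in_lp_def)
      have "real mm * (K - 2 * C) powr p = (\<Sum>i<mm. (K - 2 * C) powr p)" by simp
      also have "\<dots> \<le> (\<Sum>i<mm. \<bar>busemann_cocycle G d g (xs i, xs (Suc i))\<bar> powr p)"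
        using cbig KC2 p1 by (intro sum_mono powr_mono2) auto
      also have "\<dots> = (\<Sum>z\<in>P. \<bar>busemann_cocycle G d g z\<bar> powr p)"
        unfolding P_def by (subst sum.reindex[OF inj]) (simp add: o_def)
      also have "\<dots> \<le> (\<Sum>\<^sub>\<infinity>z\<in>\<Delta>. \<bar>busemann_cocycle G d g z\<bar> powr p)"
        using summ PD by (intro finite_sum_le_infsum) (auto simp: P_def)
      finally have lowI: "real mm * (K - 2 * C) powr p \<le> (\<Sum>\<^sub>\<infinity>z\<in>\<Delta>. \<bar>busemann_cocycle G d g z\<bar> powr p)" .
      define I where "I = (\<Sum>\<^sub>\<infinity>z\<in>\<Delta>. \<bar>busemann_cocycle G d g z\<bar> powr p)"
      have I0: "I \<ge> 0" unfolding I_def by (intro infsum_nonneg) auto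
      have "lp_norm p \<Delta> (busemann_cocycle G d g) = I powr (1 / p)" by (simp add: lp_norm_def I_def)
      then have "I powr (1 / p) \<le> max R 0" using le by simp
      then have "(I powr (1 / p)) powr p \<le> max R 0 powr p" using p1 by (intro powr_mono2) auto
      also have "(I powr (1 / p)) powr p = I" using p1 I0 by (simp add: powr_powr)
      finally have "real mm * (K - 2 * C) powr p \<le> max R 0 powr p" using lowI I_def by simp
      then have mmQ: "real mm \<le> Q" unfolding Q_def using KC2 by (simp add: field_simps)
      have "D < K * (Q + 1)" using mmgt mmQ K0 by (simp add: field_simps) (smt (verit) mult_left_mono)
      moreover have "d \<one> g \<le> D + C" using rg[of a b] ab by (simp add: ga gb D_def)
      ultimately have "d \<one> g + A \<le> K * (Q + 1) + C + A" by simp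
      then have "real (wl g) \<le> L * (K * (Q + 1) + C + A)"
        using wl_upper[OF g] L0 by (smt (verit) mult_left_mono)
      then show "wl g \<le> Nb" unfolding Nb_def by linarith
    qed
    moreover have "finite {g\<in>carrier G. wl g \<le> Nb}" unfolding wl_def by (rule wl_ball_finite[OF S])
    ultimately show ?thesis by (rule finite_subset)
  qed
  show ?thesis
    apply (rule exI[of _ p0])
    apply (intro conjI allI impI ballI)
    by (simp_all add: p0ge1 cg_lp aff_lp id_ok comp_ok iso proper)
qed

theorem mainTheorem2:
  fixes G :: "'a monoid" and d :: "'a \<Rightarrow> 'a \<Rightarrow> real" and C K :: real
  assumes "group G"
    and "non_elementary_hyperbolic G"
    and "admissible_metric G d"
    and "strongly_hyperbolic (carrier G) d"
    and "C \<ge> 0" and "roughly_geodesic (carrier G) d C"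
    and "K > 2 * C"
  defines "\<Delta> \<equiv> {(x, y). x \<in> carrier G \<and> y \<in> carrier G \<and> K - C \<le> d x y \<and> d x y \<le> K + C}"
  shows "\<exists>p0\<ge>1. \<forall>p\<ge>p0.
           (\<forall>g\<in>carrier G. in_lp p \<Delta> (busemann_cocycle G d g))
         \<and> (\<forall>g\<in>carrier G. \<forall>\<phi>. in_lp p \<Delta> \<phi> \<longrightarrow> in_lp p \<Delta> (affine_action G d g \<phi>))
         \<and> (\<forall>\<phi>. \<forall>z\<in>\<Delta>. affine_action G d \<one>\<^bsub>G\<^esub> \<phi> z = \<phi> z)
         \<and> (\<forall>g\<in>carrier G. \<forall>h\<in>carrier G. \<forall>\<phi>. \<forall>z\<in>\<Delta>.
               affine_action G d (g \<otimes>\<^bsub>G\<^esub> h) \<phi> z = affine_action G d g (affine_action G d h \<phi>) z)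
         \<and> (\<forall>g\<in>carrier G. \<forall>\<phi> \<psi>. in_lp p \<Delta> \<phi> \<longrightarrow> in_lp p \<Delta> \<psi> \<longrightarrow>
               lp_norm p \<Delta> (\<lambda>z. affine_action G d g \<phi> z - affine_action G d g \<psi> z) = lp_norm p \<Delta> (\<lambda>z. \<phi> z - \<psi> z))
         \<and> (\<forall>R. finite {g \<in> carrier G. lp_norm p \<Delta> (busemann_cocycle G d g) \<le> R})"
  using group.main_aux[OF assms(1) assms(3) assms(4) assms(5) assms(6) assms(7) meta_eq_to_obj_eq[OF assms(8)]] .


end
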